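(* Let $q:\mathcal U\to\mathbb R^p$ be continuous, differentiable on $\mathrm{Int}(\mathcal U)$, with derivative $Dq$ symmetric and positive definite on $\mathrm{Int}(\mathcal U)$, and suppose the image $\mathcal Y:=q(\mathcal U)$ is convex. Then the restriction $q|_{\mathrm{Int}(\mathcal U)}$ is a continuous bijection from $\mathrm{Int}(\mathcal U)$ onto $\mathrm{Int}(\mathcal Y)$.
   Context: $\mathcal U\subset\mathbb R^p$ is a compact convex set (with piecewise $C^1$ boundary and nonempty interior). $Dq$ denotes the Jacobian matrix of $q$. *)

theory Defs
  imports "HOL-Analysis.Analysis"
begin

definition pos_def_matrix :: "real^'n^'n \<Rightarrow> bool" where
  "pos_def_matrix A \<longleftrightarrow> (\<forall>v. v \<noteq> 0 \<longrightarrow> v \<bullet> (A *v v) > 0)"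

definition symmetric_matrix :: "real^'n^'n \<Rightarrow> bool" where
  "symmetric_matrix A \<longleftrightarrow> transpose A = A"

end

theory Submission imports Defs "HOL-Analysis.Analysis" "HOL-Homology.Invariance_of_Domain" "HOL-Complex_Analysis.Cauchy_Integral_Theorem"
begin


definition LI :: "('a::euclidean_space \<Rightarrow> 'a) \<Rightarrow> 'a \<Rightarrow> 'a \<Rightarrow> real" where
  "LI q a b = integral {0..1} (\<lambda>t. q (a + t *\<^sub>R (b - a)) \<bullet> (b - a))"

lemma seg_in:
  assumes "convex D" "a \<in> D" "b \<in> D" "t \<in> {0..1}"
  shows "a + t *\<^sub>R (b - a) \<in> D"
proof -
  have "a + t *\<^sub>R (b - a) = (1 - t) *\<^sub>R a + t *\<^sub>R b" by (simp add: algebra_simps)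
  thus ?thesis using assms by (auto intro: convexD_alt)
qed

lemma LI_param:
  fixes q :: "'a::euclidean_space \<Rightarrow> 'a"
  assumes D: "convex D" "a \<in> D" "b \<in> D" and cq: "continuous_on D q"
    and u: "u \<in> {0..1}" and v: "v \<in> {0..1}"
  defines "h \<equiv> (\<lambda>t. q (a + t *\<^sub>R (b - a)) \<bullet> (b - a))"
  defines "H \<equiv> (\<lambda>x. integral {0..x} h)"
  shows "LI q (a + u *\<^sub>R (b - a)) (a + v *\<^sub>R (b - a)) = H v - H u"
proof -
  have ch: "continuous_on {0..1} h" unfolding h_def
    by (intro continuous_intros continuous_on_compose2[OF cq]) (use seg_in[OF D] in auto)
  have Hd: "(H has_vector_derivative h x) (at x within {0..1})" if "x \<in> {0..1}" for x
    unfolding H_def by (rule integral_has_vector_derivative[OF ch that])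
  define g where "g s = u + s * (v - u)" for s
  have gi: "g s \<in> {0..1}" if "s \<in> {0..1}" for s
  proof -
    have "g s = (1 - s) * u + s * v" by (simp add: g_def algebra_simps)
    moreover have "0 \<le> (1 - s) * u + s * v" using that u v by auto
    moreover have "(1 - s) * u + s * v \<le> (1 - s) * 1 + s * 1"
      using that u v by (intro add_mono mult_left_mono) auto
    ultimately show ?thesis by auto
  qed
  have "((\<lambda>s. (v - u) * h (g s)) has_integral (H (g 1) - H (g 0))) {0..1}"
  proof (rule fundamental_theorem_of_calculus)
    fix s :: real assume s: "s \<in> {0..1}"
    have gd: "(g has_vector_derivative (v - u)) (at s within {0..1})"
      unfolding g_def by (auto intro!: derivative_eq_intros)
    have gs: "g s \<in> {0..1}" using gi s by blast
    have sub: "g ` {0..1} \<subseteq> {0..1}" using gi by blast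
    have "(H has_vector_derivative h (g s)) (at (g s) within g ` {0..1})"
      using has_vector_derivative_within_subset[OF Hd[OF gs] sub] .
    from vector_diff_chain_within[OF gd this]
    show "((\<lambda>s. H (g s)) has_vector_derivative (v - u) * h (g s)) (at s within {0..1})"
      by (simp add: o_def)
  qed simp
  moreover have "(v - u) * h (g s) = q ((a + u *\<^sub>R (b - a)) + s *\<^sub>R ((a + v *\<^sub>R (b - a)) - (a + u *\<^sub>R (b - a)))) \<bullet> ((a + v *\<^sub>R (b - a)) - (a + u *\<^sub>R (b - a)))" for s
  proof -
    have e1: "(a + u *\<^sub>R (b - a)) + s *\<^sub>R ((a + v *\<^sub>R (b - a)) - (a + u *\<^sub>R (b - a))) = a + g s *\<^sub>R (b - a)"
      by (simp add: g_def algebra_simps)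
    have e2: "(a + v *\<^sub>R (b - a)) - (a + u *\<^sub>R (b - a)) = (v - u) *\<^sub>R (b - a)"
      by (simp add: algebra_simps)
    show ?thesis unfolding e1 unfolding e2 h_def by (simp only: inner_scaleR_right)
  qed
  ultimately show ?thesis unfolding LI_def by (simp add: integral_unique g_def)
qed


lemma LI_split:
  fixes q :: "'a::euclidean_space \<Rightarrow> 'a"
  assumes D: "convex D" "a \<in> D" "b \<in> D" and cq: "continuous_on D q"
  shows "LI q a b = LI q a (midpoint a b) + LI q (midpoint a b) b"
proof -
  have m: "a + (1/2) *\<^sub>R (b - a) = midpoint a b"
    by (simp add: midpoint_def algebra_simps) (metis scaleR_add_left field_sum_of_halves scaleR_one)
  have e0: "a + 0 *\<^sub>R (b - a) = a" and e1: "a + 1 *\<^sub>R (b - a) = b" by simp_all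
  have "LI q (a + 0 *\<^sub>R (b - a)) (a + 1 *\<^sub>R (b - a)) =
        LI q (a + 0 *\<^sub>R (b - a)) (a + (1/2) *\<^sub>R (b - a)) + LI q (a + (1/2) *\<^sub>R (b - a)) (a + 1 *\<^sub>R (b - a))"
    using LI_param[OF D cq, of 0 1] LI_param[OF D cq, of 0 "1/2"] LI_param[OF D cq, of "1/2" 1] by simp
  thus ?thesis unfolding m e0 e1 .
qed

lemma LI_rev:
  fixes q :: "'a::euclidean_space \<Rightarrow> 'a"
  assumes D: "convex D" "a \<in> D" "b \<in> D" and cq: "continuous_on D q"
  shows "LI q b a = - LI q a b"
proof -
  have e0: "a + 0 *\<^sub>R (b - a) = a" and e1: "a + 1 *\<^sub>R (b - a) = b" by simp_all
  have "LI q (a + 1 *\<^sub>R (b - a)) (a + 0 *\<^sub>R (b - a)) = - LI q (a + 0 *\<^sub>R (b - a)) (a + 1 *\<^sub>R (b - a))"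
    using LI_param[OF D cq, of 0 1] LI_param[OF D cq, of 1 0] by simp
  thus ?thesis unfolding e0 e1 .
qed

lemma LI_integrable:
  fixes q :: "'a::euclidean_space \<Rightarrow> 'a"
  assumes D: "convex D" "a \<in> D" "b \<in> D" and cq: "continuous_on D q"
  shows "(\<lambda>t. q (a + t *\<^sub>R (b - a)) \<bullet> (b - a)) integrable_on {0..1}"
  by (intro integrable_continuous_real continuous_intros continuous_on_compose2[OF cq])
     (use seg_in[OF D] in auto)

lemma LI_lin:
  fixes L :: "'a::euclidean_space \<Rightarrow> 'a"
  assumes L: "linear L" and sym: "\<And>u v. u \<bullet> L v = v \<bullet> L u"
  shows "LI (\<lambda>z. w0 + L z) a b = (w0 \<bullet> b + (1/2) * (b \<bullet> L b)) - (w0 \<bullet> a + (1/2) * (a \<bullet> L a))"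
proof -
  define d where "d = b - a"
  define \<alpha> where "\<alpha> = (w0 + L a) \<bullet> d"
  define \<beta> where "\<beta> = L d \<bullet> d"
  have eq: "(w0 + L (a + t *\<^sub>R d)) \<bullet> d = \<alpha> + t * \<beta>" for t
    by (simp add: \<alpha>_def \<beta>_def linear_add[OF L] linear_scale[OF L] algebra_simps inner_add_left)
  have "((\<lambda>t. \<alpha> + t * \<beta>) has_integral ((\<lambda>t. \<alpha> * t + \<beta> * t^2 / 2) 1 - (\<lambda>t. \<alpha> * t + \<beta> * t^2 / 2) 0)) {0..1}"
    by (rule fundamental_theorem_of_calculus) (auto intro!: derivative_eq_intros simp: has_real_derivative_iff_has_vector_derivative[symmetric])
  hence "LI (\<lambda>z. w0 + L z) a b = \<alpha> + \<beta> / 2"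
    unfolding LI_def d_def[symmetric] eq by (simp add: integral_unique)
  also have "\<dots> = (w0 \<bullet> b + (1/2) * (b \<bullet> L b)) - (w0 \<bullet> a + (1/2) * (a \<bullet> L a))"
  proof -
    have b: "b = a + d" by (simp add: d_def)
    have "a \<bullet> L d = d \<bullet> L a" by (rule sym)
    thus ?thesis unfolding b \<alpha>_def \<beta>_def
      by (simp add: linear_add[OF L] inner_add_left inner_add_right algebra_simps inner_commute)
  qed
  finally show ?thesis .
qed

lemma LI_add:
  fixes q r :: "'a::euclidean_space \<Rightarrow> 'a"
  assumes D: "convex D" "a \<in> D" "b \<in> D" and cq: "continuous_on D q" and cr: "continuous_on D r"
  shows "LI (\<lambda>z. q z + r z) a b = LI q a b + LI r a b"
  unfolding LI_def inner_add_left
  by (rule integral_add[OF LI_integrable[OF D cq] LI_integrable[OF D cr]])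

lemma LI_bound:
  fixes q :: "'a::euclidean_space \<Rightarrow> 'a"
  assumes D: "convex D" "a \<in> D" "b \<in> D" and cq: "continuous_on D q"
    and B: "\<And>z. z \<in> closed_segment a b \<Longrightarrow> norm (q z) \<le> B"
  shows "\<bar>LI q a b\<bar> \<le> B * norm (b - a)"
proof -
  have "norm (integral {0..1} (\<lambda>t. q (a + t *\<^sub>R (b - a)) \<bullet> (b - a))) \<le> (B * norm (b - a)) * Henstock_Kurzweil_Integration.content {0..1::real}"
  proof (rule has_integral_bound_real[where S="{}"])
    show "0 \<le> B * norm (b - a)"
    proof -
      have "a \<in> closed_segment a b" by simp
      hence "0 \<le> B" using B[of a] norm_ge_zero order_trans by blast
      thus ?thesis by simp
    qed
    show "((\<lambda>t. q (a + t *\<^sub>R (b - a)) \<bullet> (b - a)) has_integral integral {0..1} (\<lambda>t. q (a + t *\<^sub>R (b - a)) \<bullet> (b - a))) {0..1}"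
      using LI_integrable[OF D cq] by (simp add: integrable_integral)
    fix t :: real assume t: "t \<in> {0..1} - {}"
    have "a + t *\<^sub>R (b - a) \<in> closed_segment a b"
      using t unfolding closed_segment_def by (auto intro!: exI[of _ t] simp: algebra_simps)
    hence "norm (q (a + t *\<^sub>R (b - a))) \<le> B" by (rule B)
    thus "norm (q (a + t *\<^sub>R (b - a)) \<bullet> (b - a)) \<le> B * norm (b - a)"
      by (metis Cauchy_Schwarz_ineq2 mult_right_mono norm_ge_zero order_trans real_norm_def)
  qed auto
  thus ?thesis unfolding LI_def by simp
qed


lemma hull_points_closer:
  fixes a :: "'a::real_inner"
  shows "\<lbrakk>x \<in> convex hull {a,b,c};  y \<in> convex hull {a,b,c}\<rbrakk>
         \<Longrightarrow> norm(x - y) \<le> norm(a - b) \<or> norm(x - y) \<le> norm(b - c) \<or> norm(x - y) \<le> norm(c - a)"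
  using simplex_extremal_le [of "{a,b,c}"]
  by (auto simp: norm_minus_commute)

definition tri :: "('a::euclidean_space \<Rightarrow> 'a) \<Rightarrow> 'a \<Rightarrow> 'a \<Rightarrow> 'a \<Rightarrow> real" where
  "tri q a b c = LI q a b + LI q b c + LI q c a"

lemma small_triangle:
  fixes q :: "'a::euclidean_space \<Rightarrow> 'a"
  assumes D: "convex D" and cq: "continuous_on D q"
    and der: "(q has_derivative L) (at x)" and sym: "\<And>u v. u \<bullet> L v = v \<bullet> L u" and e: "0 < e"
  shows "\<exists>k>0. \<forall>a b c. dist a b \<le> k \<and> dist b c \<le> k \<and> dist c a \<le> k \<and>
              x \<in> convex hull {a,b,c} \<and> convex hull {a,b,c} \<subseteq> D
              \<longrightarrow> \<bar>tri q a b c\<bar> \<le> e*(dist a b + dist b c + dist c a)^2"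
proof -
  from der obtain d where d: "d > 0" and dd: "\<And>y. norm (y - x) < d \<Longrightarrow> norm (q y - q x - L (y - x)) \<le> e * norm (y - x)"
    unfolding has_derivative_at_alt using e by blast
  have bl: "bounded_linear L" using der has_derivative_bounded_linear by blast
  hence lin: "linear L" by (rule bounded_linear.linear)
  show ?thesis
  proof (intro exI[of _ "d/2"] conjI allI impI)
    show "0 < d/2" using d by simp
    fix a b c assume H: "dist a b \<le> d/2 \<and> dist b c \<le> d/2 \<and> dist c a \<le> d/2 \<and> x \<in> convex hull {a,b,c} \<and> convex hull {a,b,c} \<subseteq> D"
    define S where "S = convex hull {a,b,c}"
    have S: "convex S" "a \<in> S" "b \<in> S" "c \<in> S" "x \<in> S" "S \<subseteq> D"
      using H by (auto simp: S_def hull_subset[THEN subsetD] convex_convex_hull)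
    define p where "p = dist a b + dist b c + dist c a"
    define w0 where "w0 = q x - L x"
    define R where "R z = q z - (w0 + L z)" for z
    have qeq: "q = (\<lambda>z. (w0 + L z) + R z)" by (simp add: R_def fun_eq_iff)
    have cqS: "continuous_on S q" using cq S(6) continuous_on_subset by blast
    have clin: "continuous_on S (\<lambda>z. w0 + L z)"
      by (intro continuous_intros linear_continuous_on bl)
    have cR: "continuous_on S R" unfolding R_def using continuous_on_diff[OF cqS clin] .
    have Rb: "norm (R y) \<le> e * p" if y: "y \<in> S" for y
    proof -
      have cl: "norm (y - x) \<le> norm(a - b) \<or> norm (y - x) \<le> norm(b - c) \<or> norm (y - x) \<le> norm(c - a)"
        using hull_points_closer[of y a b c x] y S(5) unfolding S_def by blast
      have "norm (y - x) \<le> d/2" using cl H by (auto simp: dist_norm)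
      hence "norm (y - x) < d" using d by simp
      hence "norm (q y - q x - L (y - x)) \<le> e * norm (y - x)" by (rule dd)
      moreover have "q y - q x - L (y - x) = R y"
        by (simp add: R_def w0_def linear_diff[OF lin] algebra_simps)
      moreover have "norm (y - x) \<le> p" using cl norm_ge_zero[of "a-b"] norm_ge_zero[of "b-c"] norm_ge_zero[of "c-a"] unfolding p_def dist_norm by linarith
      ultimately show ?thesis using e by (metis mult_left_mono less_imp_le order_trans)
    qed
    have seg: "closed_segment u v \<subseteq> S" if "u \<in> S" "v \<in> S" for u v
      using that S(1) by (simp add: closed_segment_subset)
    have split: "LI q u v = LI (\<lambda>z. w0 + L z) u v + LI R u v" if "u \<in> S" "v \<in> S" for u v
      by (subst qeq, rule LI_add[OF S(1) that clin cR])
    have bnd: "\<bar>LI R u v\<bar> \<le> e * p * dist u v" if "u \<in> S" "v \<in> S" for u v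
    proof -
      have "\<bar>LI R u v\<bar> \<le> (e * p) * norm (v - u)"
        by (rule LI_bound[OF S(1) that cR]) (use Rb seg[OF that] in blast)
      thus ?thesis by (simp add: dist_norm norm_minus_commute)
    qed
    have lin0: "LI (\<lambda>z. w0 + L z) a b + LI (\<lambda>z. w0 + L z) b c + LI (\<lambda>z. w0 + L z) c a = 0"
      by (simp add: LI_lin[OF lin sym])
    have "tri q a b c = LI R a b + LI R b c + LI R c a"
      unfolding tri_def using split[of a b] split[of b c] split[of c a] S lin0 by simp
    hence "\<bar>tri q a b c\<bar> \<le> e * p * dist a b + e * p * dist b c + e * p * dist c a"
      using bnd[of a b] bnd[of b c] bnd[of c a] S by linarith
    also have "\<dots> = e * p^2" by (simp add: p_def power2_eq_square algebra_simps)
    finally show "\<bar>tri q a b c\<bar> \<le> e*(dist a b + dist b c + dist c a)^2" by (simp add: p_def)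
  qed
qed

lemma dist_mid_mid: "dist (midpoint u v) (midpoint u w) = dist v w / 2"
  for u v w :: "'a::real_normed_vector"
proof -
  have "midpoint u v - midpoint u w = (1/2) *\<^sub>R (v - w)"
    by (simp add: midpoint_def algebra_simps)
  thus ?thesis by (simp add: dist_norm)
qed

lemma dist_mid_mid1: "dist (midpoint u v) (midpoint w u) = dist v w / 2"
  for u v w :: "'a::real_normed_vector"
proof -
  have "midpoint u v - midpoint w u = (1/2) *\<^sub>R (v - w)"
    by (simp add: midpoint_def algebra_simps)
  thus ?thesis by (simp add: dist_norm)
qed

lemma dist_mid_mid2: "dist (midpoint u v) (midpoint v w) = dist u w / 2"
  for u v w :: "'a::real_normed_vector"
proof -
  have "midpoint u v - midpoint v w = (1/2) *\<^sub>R (u - w)"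
    by (simp add: midpoint_def algebra_simps)
  thus ?thesis by (simp add: dist_norm)
qed

lemma tri_quad:
  fixes q :: "'a::euclidean_space \<Rightarrow> 'a"
  assumes D: "convex D" "x \<in> D" "y \<in> D" "z \<in> D" and cq: "continuous_on D q"
  shows "tri q x y z = tri q x (midpoint x y) (midpoint z x) + tri q (midpoint y z) (midpoint x y) y
           + tri q (midpoint y z) z (midpoint z x) + tri q (midpoint y z) (midpoint z x) (midpoint x y)"
proof -
  have m: "midpoint x y \<in> D" "midpoint y z \<in> D" "midpoint z x \<in> D"
    using D by (meson closed_segment_subset midpoint_in_closed_segment subsetD)+
  show ?thesis unfolding tri_def
    using LI_split[OF D(1,2,3) cq] LI_split[OF D(1,3,4) cq] LI_split[OF D(1,4,2) cq]
      LI_rev[OF D(1) m(1) m(3) cq] LI_rev[OF D(1) m(2) m(1) cq] LI_rev[OF D(1) m(3) m(2) cq]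
    by (simp add: midpoint_sym)
qed


lemma goursat:
  fixes q :: "'a::euclidean_space \<Rightarrow> 'a"
  assumes D: "convex D" and cq: "continuous_on D q"
    and der: "\<And>x. x \<in> D \<Longrightarrow> (q has_derivative L x) (at x)"
    and sym: "\<And>x u v. x \<in> D \<Longrightarrow> u \<bullet> L x v = v \<bullet> L x u"
    and abc: "a \<in> D" "b \<in> D" "c \<in> D"
  shows "tri q a b c = 0"
proof (rule ccontr)
  assume nz: "tri q a b c \<noteq> 0"
  define K where "K = 1 + max (dist a b) (max (dist b c) (dist c a))"
  define e where "e = \<bar>tri q a b c\<bar> / K^2"
  have K1: "K \<ge> 1" by (simp add: K_def max.coboundedI1)
  then have K: "K > 0" by linarith
  have e: "e > 0" unfolding e_def using nz K by simp
  have hD: "convex hull {a,b,c} \<subseteq> D" using D abc by (simp add: hull_minimal)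
  define At where "At x y z n \<longleftrightarrow>
        convex hull {x,y,z} \<subseteq> convex hull {a,b,c} \<and>
        dist x y \<le> K/2^n \<and> dist y z \<le> K/2^n \<and> dist z x \<le> K/2^n \<and>
        \<bar>tri q x y z\<bar> \<ge> e*(K/2^n)^2" for x y z and n :: nat
  have dK: "dist a b \<le> K" "dist b c \<le> K" "dist c a \<le> K"
    by (simp_all add: K_def)
  have At0: "At a b c 0"
    using K dK by (simp add: At_def e_def)
  have AtSuc: "\<exists>x' y' z'. At x' y' z' (Suc n) \<and> convex hull {x',y',z'} \<subseteq> convex hull {x,y,z}"
    if At: "At x y z n" for x y z n
  proof -
    have xyz: "x \<in> convex hull {a,b,c}" "y \<in> convex hull {a,b,c}" "z \<in> convex hull {a,b,c}"
      using At unfolding At_def by (meson hull_subset insert_subset subset_trans)+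
    have xyzD: "x \<in> D" "y \<in> D" "z \<in> D" using xyz hD by auto
    define a' where "a' = midpoint y z"
    define b' where "b' = midpoint z x"
    define c' where "c' = midpoint x y"
    have inh: "x \<in> convex hull {x,y,z}" "y \<in> convex hull {x,y,z}" "z \<in> convex hull {x,y,z}"
      by (simp_all add: hull_subset[THEN subsetD])
    have inm: "a' \<in> convex hull {x,y,z}" "b' \<in> convex hull {x,y,z}" "c' \<in> convex hull {x,y,z}"
      unfolding a'_def b'_def c'_def using inh by (simp_all add: midpoints_in_convex_hull)
    have hsub: "convex hull {u,v,w} \<subseteq> convex hull {x,y,z}"
      if "u \<in> convex hull {x,y,z}" "v \<in> convex hull {x,y,z}" "w \<in> convex hull {x,y,z}" for u v w
      using that by (simp add: hull_minimal convex_convex_hull)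
    have hxyz: "convex hull {x,y,z} \<subseteq> convex hull {a,b,c}" using At by (simp add: At_def)
    have dl: "dist x y \<le> K/2^n" "dist y z \<le> K/2^n" "dist z x \<le> K/2^n" using At by (simp_all add: At_def)
    have ge: "e*(K/2^n)^2 \<le> norm (tri q x c' b' + tri q a' c' y + tri q a' z b' + tri q a' b' c')"
      using At tri_quad[OF D xyzD cq] unfolding At_def a'_def b'_def c'_def by simp
    have pw: "e*(K/2^n)^2 / 4 = e*(K/2^Suc n)^2" by (simp add: power2_eq_square field_simps)
    have hv: "dist x y / 2 \<le> K/2^Suc n" "dist y z / 2 \<le> K/2^Suc n" "dist z x / 2 \<le> K/2^Suc n"
      using dl by (simp_all add: divide_right_mono)
    have md: "dist x c' = dist x y / 2" "dist c' b' = dist y z / 2" "dist b' x = dist z x / 2"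
      "dist a' c' = dist z x / 2" "dist c' y = dist x y / 2" "dist y a' = dist y z / 2"
      "dist a' z = dist y z / 2" "dist z b' = dist z x / 2" "dist b' a' = dist x y / 2"
      "dist a' b' = dist x y / 2" "dist b' c' = dist y z / 2" "dist c' a' = dist z x / 2"
      unfolding a'_def b'_def c'_def
      by (simp_all add: dist_midpoint dist_mid_mid1 dist_mid_mid2 dist_commute)
    from norm_sum_lemma[OF ge, unfolded pw]
    consider "e*(K/2^Suc n)^2 \<le> \<bar>tri q x c' b'\<bar>" | "e*(K/2^Suc n)^2 \<le> \<bar>tri q a' c' y\<bar>"
      | "e*(K/2^Suc n)^2 \<le> \<bar>tri q a' z b'\<bar>" | "e*(K/2^Suc n)^2 \<le> \<bar>tri q a' b' c'\<bar>" by auto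
    then show ?thesis
    proof cases
      case 1
      have "At x c' b' (Suc n)" unfolding At_def md
        using 1 hv subset_trans[OF hsub[of x c' b'] hxyz] inh inm by simp
      then show ?thesis using hsub[of x c' b'] inh inm by blast
    next
      case 2
      have "At a' c' y (Suc n)" unfolding At_def md
        using 2 hv subset_trans[OF hsub[of a' c' y] hxyz] inh inm by simp
      then show ?thesis using hsub[of a' c' y] inh inm by blast
    next
      case 3
      have "At a' z b' (Suc n)" unfolding At_def md
        using 3 hv subset_trans[OF hsub[of a' z b'] hxyz] inh inm by simp
      then show ?thesis using hsub[of a' z b'] inh inm by blast
    next
      case 4
      have "At a' b' c' (Suc n)" unfolding At_def md
        using 4 hv subset_trans[OF hsub[of a' b' c'] hxyz] inh inm by simp
      then show ?thesis using hsub[of a' b' c'] inh inm by blast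
    qed
  qed
  obtain fa fb fc
    where f0 [simp]: "fa 0 = a" "fb 0 = b" "fc 0 = c"
      and At: "\<And>n. At (fa n) (fb n) (fc n) n"
      and conv_le: "\<And>n. convex hull {fa(Suc n), fb(Suc n), fc(Suc n)} \<subseteq> convex hull {fa n, fb n, fc n}"
    using Chain3[of At a b c "\<lambda>x' y' z' x y z. convex hull {x',y',z'} \<subseteq> convex hull {x,y,z}", OF At0 AtSuc]
    by blast
  obtain x where x: "\<And>n. x \<in> convex hull {fa n, fb n, fc n}"
  proof (rule bounded_closed_nest)
    show "\<And>n. closed (convex hull {fa n, fb n, fc n})"
      by (simp add: compact_imp_closed finite_imp_compact_convex_hull)
    show "\<And>m n. m \<le> n \<Longrightarrow> convex hull {fa n, fb n, fc n} \<subseteq> convex hull {fa m, fb m, fc m}"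
      by (erule transitive_stepwise_le) (auto simp: conv_le)
  qed (fastforce intro: finite_imp_bounded_convex_hull)+
  have xin: "x \<in> convex hull {a,b,c}" using x[of 0] by simp
  hence xD: "x \<in> D" using hD by auto
  obtain k where k: "k > 0" and kk: "\<And>a b c. dist a b \<le> k \<and> dist b c \<le> k \<and> dist c a \<le> k \<and>
              x \<in> convex hull {a,b,c} \<and> convex hull {a,b,c} \<subseteq> D
              \<Longrightarrow> \<bar>tri q a b c\<bar> \<le> (e/10)*(dist a b + dist b c + dist c a)^2"
    using small_triangle[OF D cq der[OF xD] sym[OF xD], of "e/10"] e by auto
  obtain n where n: "K / k < 2 ^ n" using real_arch_pow[of 2 "K/k"] by auto
  have Kn: "K / 2 ^ n < k" using n k by (auto simp: field_simps)
  have AtN: "At (fa n) (fb n) (fc n) n" by (rule At)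
  hence dd: "dist (fa n) (fb n) \<le> K/2^n" "dist (fb n) (fc n) \<le> K/2^n" "dist (fc n) (fa n) \<le> K/2^n"
    and hs: "convex hull {fa n, fb n, fc n} \<subseteq> convex hull {a,b,c}"
    and big: "\<bar>tri q (fa n) (fb n) (fc n)\<bar> \<ge> e*(K/2^n)^2"
    by (simp_all add: At_def)
  have le: "\<bar>tri q (fa n) (fb n) (fc n)\<bar> \<le> (e/10)*(dist (fa n) (fb n) + dist (fb n) (fc n) + dist (fc n) (fa n))^2"
  proof (rule kk, intro conjI)
    show "dist (fa n) (fb n) \<le> k" using dd(1) Kn by linarith
    show "dist (fb n) (fc n) \<le> k" using dd(2) Kn by linarith
    show "dist (fc n) (fa n) \<le> k" using dd(3) Kn by linarith
    show "x \<in> convex hull {fa n, fb n, fc n}" by (rule x)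
    show "convex hull {fa n, fb n, fc n} \<subseteq> D" using hs hD by (rule subset_trans)
  qed
  have "(dist (fa n) (fb n) + dist (fb n) (fc n) + dist (fc n) (fa n))^2 \<le> (3 * (K/2^n))^2"
    by (rule power_mono) (use dd in auto)
  hence "\<bar>tri q (fa n) (fb n) (fc n)\<bar> \<le> (e/10) * (9 * (K/2^n)^2)"
  proof -
    have "(3 * (K/2^n))^2 = 9 * (K/2^n)^2" by (simp only: power_mult_distrib) simp
    with \<open>(dist (fa n) (fb n) + dist (fb n) (fc n) + dist (fc n) (fa n))^2 \<le> (3 * (K/2^n))^2\<close>
    have "(e/10) * (dist (fa n) (fb n) + dist (fb n) (fc n) + dist (fc n) (fa n))^2 \<le> (e/10) * (9 * (K/2^n)^2)"
      using e by (intro mult_left_mono) auto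
    with le show ?thesis by linarith
  qed
  moreover have "(e/10) * (9 * (K/2^n)^2) < e*(K/2^n)^2" using e K by simp
  ultimately show False using big by linarith
qed


lemma seg_deriv:
  fixes q :: "'a::euclidean_space \<Rightarrow> 'a"
  assumes der: "(q has_derivative L) (at (a + t *\<^sub>R (b - a)))" 
  shows "DERIV (\<lambda>t. q (a + t *\<^sub>R (b - a)) \<bullet> (b - a)) t :> ((b - a) \<bullet> L (b - a))"
proof -
  have lin: "linear L" using der has_derivative_linear by blast
  have P: "((\<lambda>t. a + t *\<^sub>R (b - a)) has_derivative (\<lambda>s. s *\<^sub>R (b - a))) (at t)"
    by (auto intro!: derivative_eq_intros)
  have c: "((\<lambda>t. q (a + t *\<^sub>R (b - a))) has_derivative (\<lambda>s. L (s *\<^sub>R (b - a)))) (at t)"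
    using has_derivative_compose[OF P der] .
  have "((\<lambda>t. q (a + t *\<^sub>R (b - a)) \<bullet> (b - a)) has_derivative (\<lambda>s. L (s *\<^sub>R (b - a)) \<bullet> (b - a))) (at t)"
    by (rule has_derivative_inner_left[OF c])
  moreover have "(\<lambda>s. L (s *\<^sub>R (b - a)) \<bullet> (b - a)) = (*) ((b - a) \<bullet> L (b - a))"
    by (rule ext) (simp add: linear_scale[OF lin] inner_commute)
  ultimately show ?thesis
    unfolding has_field_derivative_def by metis
qed


lemma seg_strict:
  fixes q :: "'a::euclidean_space \<Rightarrow> 'a"
  assumes D: "convex D" and der: "\<And>x. x \<in> D \<Longrightarrow> (q has_derivative L x) (at x)"
    and pd: "\<And>x v. x \<in> D \<Longrightarrow> v \<noteq> 0 \<Longrightarrow> v \<bullet> L x v > 0"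
    and ab: "a \<in> D" "b \<in> D" "a \<noteq> b"
  shows "q a \<bullet> (b - a) < q b \<bullet> (b - a)"
proof -
  have "(\<lambda>t. q (a + t *\<^sub>R (b - a)) \<bullet> (b - a)) 0 < (\<lambda>t. q (a + t *\<^sub>R (b - a)) \<bullet> (b - a)) 1"
  proof (rule DERIV_pos_imp_increasing[of 0 1])
    fix x :: real assume "0 \<le> x" "x \<le> 1"
    hence xD: "a + x *\<^sub>R (b - a) \<in> D" using seg_in[OF D ab(1,2)] by auto
    show "\<exists>y. DERIV (\<lambda>t. q (a + t *\<^sub>R (b - a)) \<bullet> (b - a)) x :> y \<and> y > 0"
      using seg_deriv[OF der[OF xD]] pd[OF xD, of "b - a"] ab(3) by auto
  qed simp
  thus ?thesis by simp
qed

lemma seg_le_LI: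
  fixes q :: "'a::euclidean_space \<Rightarrow> 'a"
  assumes D: "convex D" and cq: "continuous_on D q" and der: "\<And>x. x \<in> D \<Longrightarrow> (q has_derivative L x) (at x)"
    and psd: "\<And>x v. x \<in> D \<Longrightarrow> v \<bullet> L x v \<ge> 0"
    and ab: "a \<in> D" "b \<in> D"
  shows "q a \<bullet> (b - a) \<le> LI q a b"
proof -
  define h where "h t = q (a + t *\<^sub>R (b - a)) \<bullet> (b - a)" for t
  have mono: "h 0 \<le> h t" if t: "t \<in> {0..1}" for t
  proof (rule DERIV_nonneg_imp_nondecreasing[of 0 t])
    fix x :: real assume "0 \<le> x" "x \<le> t"
    hence xD: "a + x *\<^sub>R (b - a) \<in> D" using seg_in[OF D ab(1,2)] t by auto
    show "\<exists>y. DERIV h x :> y \<and> y \<ge> 0"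
      unfolding h_def using seg_deriv[OF der[OF xD]] psd[OF xD, of "b - a"] by auto
  qed (use t in auto)
  have "integral {0..1} (\<lambda>t::real. h 0) \<le> integral {0..1} h"
  proof (rule Henstock_Kurzweil_Integration.integral_le[of "\<lambda>t. h 0" "{0..1}" h])
    have "h = (\<lambda>t. q (a + t *\<^sub>R (b - a)) \<bullet> (b - a))" by (simp add: h_def fun_eq_iff)
    thus "h integrable_on {0..1}" using LI_integrable[OF D ab cq] by simp
  qed (use mono in auto)
  moreover have "h = (\<lambda>t. q (a + t *\<^sub>R (b - a)) \<bullet> (b - a))" by (simp add: h_def fun_eq_iff)
  ultimately show ?thesis unfolding LI_def by (simp add: h_def)
qed

lemma cyclic:
  fixes q :: "'a::euclidean_space \<Rightarrow> 'a"
  assumes D: "convex D" and cq: "continuous_on D q" and der: "\<And>x. x \<in> D \<Longrightarrow> (q has_derivative L x) (at x)"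
    and sym: "\<And>x u v. x \<in> D \<Longrightarrow> u \<bullet> L x v = v \<bullet> L x u"
    and psd: "\<And>x v. x \<in> D \<Longrightarrow> v \<bullet> L x v \<ge> 0"
    and abc: "a \<in> D" "b \<in> D" "c \<in> D"
  shows "q a \<bullet> (b - a) + q b \<bullet> (c - b) + q c \<bullet> (a - c) \<le> 0"
proof -
  have "tri q a b c = 0" by (rule goursat[OF D cq der sym abc])
  thus ?thesis unfolding tri_def
    using seg_le_LI[OF D cq der psd abc(1,2)] seg_le_LI[OF D cq der psd abc(2,3)] seg_le_LI[OF D cq der psd abc(3,1)]
    by linarith
qed


theorem mainTheorem8:
  fixes U :: "(real^'p) set"
    and q :: "real^'p \<Rightarrow> real^'p"
    and Dq :: "real^'p \<Rightarrow> real^'p \<Rightarrow> real^'p"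
  assumes "compact U" and "convex U" and "interior U \<noteq> {}"
    and "continuous_on U q"
    and "\<And>x. x \<in> interior U \<Longrightarrow> (q has_derivative Dq x) (at x)"
    and "\<And>x. x \<in> interior U \<Longrightarrow> symmetric_matrix (matrix (Dq x))"
    and "\<And>x. x \<in> interior U \<Longrightarrow> pos_def_matrix (matrix (Dq x))"
    and "convex (q ` U)"
  shows "continuous_on (interior U) q \<and> bij_betw q (interior U) (interior (q ` U))"
proof -
  define D where "D = interior U"
  have oD: "open D" unfolding D_def by simp
  have cD: "convex D" unfolding D_def using assms(2) by (simp add: convex_interior)
  have DU: "D \<subseteq> U" by (simp add: D_def interior_subset)
  have cqD: "continuous_on D q" using assms(4) DU continuous_on_subset by blast
  have der: "\<And>x. x \<in> D \<Longrightarrow> (q has_derivative Dq x) (at x)" using assms(5) D_def by auto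
  have lin: "\<And>x. x \<in> D \<Longrightarrow> linear (Dq x)" using der has_derivative_linear by blast
  have mv: "\<And>x v. x \<in> D \<Longrightarrow> Dq x v = matrix (Dq x) *v v" using matrix_vector_mul(2)[OF lin] by metis
  have sym: "u \<bullet> Dq x v = v \<bullet> Dq x u" if x: "x \<in> D" for x u v
  proof -
    have T: "transpose (matrix (Dq x)) = matrix (Dq x)"
      using assms(6)[of x] x by (simp add: symmetric_matrix_def D_def)
    have "u \<bullet> Dq x v = (u v* matrix (Dq x)) \<bullet> v" by (simp add: mv[OF x] dot_lmul_matrix)
    also have "\<dots> = (transpose (matrix (Dq x)) *v u) \<bullet> v" by simp
    also have "\<dots> = v \<bullet> Dq x u" by (simp add: T mv[OF x] inner_commute)
    finally show ?thesis .
  qed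
  have pd: "v \<bullet> Dq x v > 0" if "x \<in> D" "v \<noteq> 0" for x v
    using assms(7)[of x] that mv[of x v] by (simp add: pos_def_matrix_def D_def)
  have psd: "v \<bullet> Dq x v \<ge> 0" if "x \<in> D" for x v
    using pd[OF that, of v] by (cases "v = 0") auto
  have inj: "inj_on q D"
  proof (rule inj_onI)
    fix a b assume ab: "a \<in> D" "b \<in> D" "q a = q b"
    show "a = b"
    proof (rule ccontr)
      assume "a \<noteq> b"
      from seg_strict[OF cD der pd ab(1,2) this] ab(3) show False by simp
    qed
  qed
  obtain c where c: "c \<in> D" using assms(3) D_def by auto
  have cU: "c \<in> U" using c DU by auto
  have inD: "w + \<delta> *\<^sub>R (c - w) \<in> D" if "w \<in> U" "\<delta> \<in> {0<..1}" for w \<delta>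
  proof -
    have "w - \<delta> *\<^sub>R (w - c) \<in> interior U"
      by (rule mem_interior_convex_shrink[OF assms(2)]) (use that c D_def in auto)
    moreover have "w - \<delta> *\<^sub>R (w - c) = w + \<delta> *\<^sub>R (c - w)" by (simp add: algebra_simps)
    ultimately show ?thesis by (simp add: D_def)
  qed
  have inU: "w + \<delta> *\<^sub>R (c - w) \<in> U" if "w \<in> U" "\<delta> \<in> {0..1}" for w \<delta>
    using seg_in[OF assms(2) that(1) cU that(2)] .
  have cseg: "continuous_on {0..1} (\<lambda>\<delta>. q (w + \<delta> *\<^sub>R (c - w)))" if "w \<in> U" for w
    by (intro continuous_on_compose2[OF assms(4)] continuous_intros) (use inU[OF that] in auto)
  have cyc4: "q a \<bullet> (z - a) + q z \<bullet> (b - z) + q b \<bullet> (a - b) \<le> 0"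
    if abz: "a \<in> U" "b \<in> U" "z \<in> D" for a b z
  proof -
    define E where "E \<delta> = q (a + \<delta> *\<^sub>R (c - a)) \<bullet> (z - (a + \<delta> *\<^sub>R (c - a))) + q z \<bullet> ((b + \<delta> *\<^sub>R (c - b)) - z)
       + q (b + \<delta> *\<^sub>R (c - b)) \<bullet> ((a + \<delta> *\<^sub>R (c - a)) - (b + \<delta> *\<^sub>R (c - b)))" for \<delta>
    have cE: "continuous_on (closure {0<..1}) E"
      unfolding E_def using cseg[OF abz(1)] cseg[OF abz(2)] by (simp) (intro continuous_intros; assumption)
    have "E 0 \<le> 0"
    proof (rule continuous_le_on_closure[OF cE])
      show "0 \<in> closure {0<..1::real}" by simp
      fix \<delta> :: real assume d: "\<delta> \<in> {0<..1}"
      show "E \<delta> \<le> 0" unfolding E_def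
        by (rule cyclic[OF cD cqD der sym psd inD[OF abz(1) d] abz(3) inD[OF abz(2) d]])
    qed
    thus ?thesis by (simp add: E_def)
  qed
  have sub1: "q ` D \<subseteq> interior (q ` U)"
  proof (rule interior_maximal)
    show "q ` D \<subseteq> q ` U" using DU by auto
    show "open (q ` D)" by (rule invariance_of_domain[OF cqD oD inj])
  qed
  have sub2: "interior (q ` U) \<subseteq> q ` D"
  proof
    fix y assume y: "y \<in> interior (q ` U)"
    show "y \<in> q ` D"
    proof (rule ccontr)
      assume ny: "y \<notin> q ` D"
      from y interior_subset obtain x0 where x0: "x0 \<in> U" "q x0 = y" by blast
      have x0D: "x0 \<notin> D" using ny x0 by auto
      have clU: "closure U = U" using compact_imp_closed[OF assms(1)] closure_closed by blast
      have riU: "rel_interior U = D" using rel_interior_nonempty_interior assms(3) D_def by auto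
      have h1: "x0 \<in> closure U" using clU x0 by simp
      have h2: "x0 \<notin> rel_interior U" using riU x0D by simp
      obtain a where a0: "a \<noteq> 0" and asup: "\<And>z. z \<in> closure U \<Longrightarrow> a \<bullet> x0 \<le> a \<bullet> z"
          and astr: "\<And>z. z \<in> rel_interior U \<Longrightarrow> a \<bullet> x0 < a \<bullet> z"
        by (rule supporting_hyperplane_relative_frontier[OF assms(2) h1 h2]) blast
      obtain r where r: "r > 0" "ball y r \<subseteq> q ` U" using y unfolding mem_interior by blast
      define t where "t = r / (2 * norm a)"
      have na: "norm a > 0" using a0 by simp
      have t: "t > 0" using r na by (simp add: t_def)
      have "dist y (y - t *\<^sub>R a) = t * norm a" using t by (simp add: dist_norm)
      also have "\<dots> = r / 2" using na by (simp add: t_def)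
      finally have "y - t *\<^sub>R a \<in> ball y r" using r by simp
      hence "y - t *\<^sub>R a \<in> q ` U" using r(2) by (rule subsetD[rotated])
      then obtain x1 where x1: "x1 \<in> U" "q x1 = y - t *\<^sub>R a" by (auto simp: image_iff)
      define m0 where "m0 = a \<bullet> c - a \<bullet> x0"
      have m0: "m0 > 0" using astr[of c] c riU by (simp add: m0_def)
      define z where "z s = x1 + s *\<^sub>R (c - x1)" for s
      define g where "g s = (q (z s) - q x1) \<bullet> (c - x1)" for s
      have gge: "g s \<ge> t * m0" if s: "s \<in> {0<..1}" for s
      proof -
        have zD: "z s \<in> D" unfolding z_def by (rule inD[OF x1(1) s])
        have C: "q x0 \<bullet> (z s - x0) + q (z s) \<bullet> (x1 - z s) + q x1 \<bullet> (x0 - x1) \<le> 0"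
          by (rule cyc4[OF x0(1) x1(1) zD])
        have idt: "p0 \<bullet> (uz - u0) + pz \<bullet> (u1 - uz) + p1 \<bullet> (u0 - u1) = (p0 - p1) \<bullet> (uz - u0) + (pz - p1) \<bullet> (u1 - uz)"
          for p0 p1 pz u0 u1 uz :: "real^'p"
          by (simp only: inner_diff_left inner_diff_right)
        have d1: "q x0 - q x1 = t *\<^sub>R a" using x0(2) x1(2) by simp
        have d2: "x1 - z s = - (s *\<^sub>R (c - x1))" by (simp add: z_def)
        have eq: "q x0 \<bullet> (z s - x0) + q (z s) \<bullet> (x1 - z s) + q x1 \<bullet> (x0 - x1) = t * (a \<bullet> (z s - x0)) - s * g s"
        proof -
          have "q x0 \<bullet> (z s - x0) + q (z s) \<bullet> (x1 - z s) + q x1 \<bullet> (x0 - x1)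
              = (q x0 - q x1) \<bullet> (z s - x0) + (q (z s) - q x1) \<bullet> (x1 - z s)" by (rule idt)
          also have "\<dots> = (t *\<^sub>R a) \<bullet> (z s - x0) + (q (z s) - q x1) \<bullet> (- (s *\<^sub>R (c - x1)))"
            by (simp only: d1 d2)
          also have "\<dots> = t * (a \<bullet> (z s - x0)) - s * g s" by (simp add: g_def)
          finally show ?thesis .
        qed
        have zx: "z s - x0 = (1 - s) *\<^sub>R (x1 - x0) + s *\<^sub>R (c - x0)" by (simp add: z_def algebra_simps)
        have "a \<bullet> (x1 - x0) \<ge> 0" using asup[of x1] x1(1) clU by (simp add: inner_diff_right)
        hence "(1 - s) * (a \<bullet> (x1 - x0)) \<ge> 0" using s by simp
        hence low: "a \<bullet> (z s - x0) \<ge> s * m0"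
          unfolding zx by (simp add: inner_add_right inner_diff_right m0_def)
        have "t * (s * m0) \<le> t * (a \<bullet> (z s - x0))" using low t by (simp add: mult_left_mono)
        hence "s * (t * m0) \<le> s * g s" using C eq by (simp add: algebra_simps)
        thus ?thesis using s by simp
      qed
      have cg: "continuous_on (closure {0<..1}) g"
        unfolding g_def z_def using cseg[OF x1(1)] by simp (intro continuous_intros; assumption)
      have "g 0 \<ge> t * m0"
        by (rule continuous_ge_on_closure[OF cg]) (use gge in auto)
      moreover have "g 0 = 0" by (simp add: g_def z_def)
      moreover have "t * m0 > 0" using t m0 by simp
      ultimately show False by simp
    qed
  qed
  have "bij_betw q D (interior (q ` U))"
    unfolding bij_betw_def using inj sub1 sub2 by blast
  thus ?thesis using cqD by (simp add: D_def)
qed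

end
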